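(* There exist metric spaces $(X,p)$, $(Y,d)$ and a multi-valued function $F: X \Rightarrow Y$ such that there is no metric $d_F$ on the set $F[X] = \{F(x) : x\in X\}$ with the property that for every $x \in X$, the single-valued map $x' \mapsto F(x')$ from $(X,p)$ to $(F[X], d_F)$ is continuous at $x$ (in the usual sense) if and only if $F$ is continuous at $x$ as a multi-valued function.
   Context: A multi-valued function $F: X \Rightarrow Y$ assigns to each $x$ a nonempty set $F(x)\subseteq Y$. $F$ is continuous at $x$ (as a multi-valued function) if there is some $y \in F(x)$ such that for every $\varepsilon>0$ there is $\delta>0$ such that for every $x' \in B_p(x,\delta)$ there is $y' \in F(x')$ with $d(y,y')<\varepsilon$. *)

theory Defs
  imports "HOL-Analysis.Analysis"
begin

definition sv_continuous_at ::
  "'a set \<Rightarrow> ('a \<Rightarrow> 'a \<Rightarrow> real) \<Rightarrow> ('b \<Rightarrow> 'b \<Rightarrow> real) \<Rightarrow> ('a \<Rightarrow> 'b) \<Rightarrow> 'a \<Rightarrow> bool" where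
  "sv_continuous_at X p dZ f x \<longleftrightarrow>
     (\<forall>\<epsilon>>0. \<exists>\<delta>>0. \<forall>x'\<in>X. p x x' < \<delta> \<longrightarrow> dZ (f x) (f x') < \<epsilon>)"

definition mv_continuous_at ::
  "'a set \<Rightarrow> ('a \<Rightarrow> 'a \<Rightarrow> real) \<Rightarrow> ('b \<Rightarrow> 'b \<Rightarrow> real) \<Rightarrow> ('a \<Rightarrow> 'b set) \<Rightarrow> 'a \<Rightarrow> bool" where
  "mv_continuous_at X p d F x \<longleftrightarrow>
     (\<exists>y\<in>F x. \<forall>\<epsilon>>0. \<exists>\<delta>>0. \<forall>x'\<in>X. p x x' < \<delta> \<longrightarrow> (\<exists>y'\<in>F x'. d y y' < \<epsilon>))"

end

theory Submission
  imports Defs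
begin

lemma met_real: "Metric_space (UNIV::real set) dist"
  by (rule Met_TC.Metric_space_axioms)

theorem corollary2p7:
  shows "\<exists>(X::real set) (p::real \<Rightarrow> real \<Rightarrow> real) (Y::real set) (d::real \<Rightarrow> real \<Rightarrow> real)
            (F::real \<Rightarrow> real set).
     Metric_space X p \<and> Metric_space Y d \<and>
     (\<forall>x\<in>X. F x \<noteq> {} \<and> F x \<subseteq> Y) \<and>
     \<not> (\<exists>dF :: real set \<Rightarrow> real set \<Rightarrow> real.
           Metric_space (F ` X) dF \<and>
           (\<forall>x\<in>X. sv_continuous_at X p dF F x \<longleftrightarrow> mv_continuous_at X p d F x))"
proof -
  define F :: "real \<Rightarrow> real set" where "F x = (if x = 0 then {0,1} else {0})" for x
  have "\<not> (\<exists>dF :: real set \<Rightarrow> real set \<Rightarrow> real.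
           Metric_space (F ` UNIV) dF \<and>
           (\<forall>x\<in>UNIV. sv_continuous_at UNIV dist dF F x \<longleftrightarrow> mv_continuous_at UNIV dist dist F x))"
  proof
    assume "\<exists>dF :: real set \<Rightarrow> real set \<Rightarrow> real.
           Metric_space (F ` UNIV) dF \<and>
           (\<forall>x\<in>UNIV. sv_continuous_at UNIV dist dF F x \<longleftrightarrow> mv_continuous_at UNIV dist dist F x)"
    then obtain dF where M: "Metric_space (F ` UNIV) dF"
      and E: "\<And>x. sv_continuous_at UNIV dist dF F x \<longleftrightarrow> mv_continuous_at UNIV dist dist F x"
      by blast
    have "mv_continuous_at UNIV dist dist F 0"
      unfolding mv_continuous_at_def
      by (rule bexI[where x=0]) (auto simp: F_def intro!: exI[where x=1])
    hence sv: "sv_continuous_at UNIV dist dF F 0" using E by simp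
    have in1: "F 0 \<in> F ` UNIV" and in2: "F 1 \<in> F ` UNIV" by auto
    have ne: "F 0 \<noteq> F 1" by (auto simp: F_def)
    have pos: "dF (F 0) (F 1) > 0"
      using Metric_space.zero[OF M in1 in2] Metric_space.nonneg[OF M, of "F 0" "F 1"] ne by linarith
    then obtain \<delta> where d: "\<delta> > 0" and H: "\<And>x'. dist 0 x' < \<delta> \<Longrightarrow> dF (F 0) (F x') < dF (F 0) (F 1)"
      using sv unfolding sv_continuous_at_def by blast
    have "dF (F 0) (F (\<delta>/2)) < dF (F 0) (F 1)" using H[of "\<delta>/2"] d by simp
    moreover have "F (\<delta>/2) = F 1" using d by (simp add: F_def)
    ultimately show False by simp
  qed
  moreover have "\<forall>x\<in>(UNIV::real set). F x \<noteq> {} \<and> F x \<subseteq> UNIV" by (simp add: F_def)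
  ultimately show ?thesis using met_real by blast
qed

end
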